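(* There is no finitely generated partially commutative group $G$ with $\mathrm{cdim}(G)=3$.
   Context: A finitely generated partially commutative group is a group $G(\Gamma)=\langle X\mid [a,b]=1 \text{ whenever } a,b \text{ are joined by an edge of }\Gamma\rangle$ for a finite simple undirected graph $\Gamma$ with vertex set $X$, where $[a,b]=a^{-1}b^{-1}ab$. The centraliser dimension $\mathrm{cdim}(H)$ of a group $H$ is the maximal length $k$ of a chain $C_0>C_1>\cdots>C_k$ (strict inclusions) of centralisers of subsets of $H$. *)

theory Defs
  imports "HOL-Algebra.Group"
begin

definition fin_simple_graph :: "'a set \<Rightarrow> ('a \<Rightarrow> 'a \<Rightarrow> bool) \<Rightarrow> bool" where
  "fin_simple_graph V E \<longleftrightarrow> finite V \<and> (\<forall>a b. E a b \<longrightarrow> E b a) \<and> (\<forall>a. \<not> E a a)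
     \<and> (\<forall>a b. E a b \<longrightarrow> a \<in> V \<and> b \<in> V)"

text \<open>Words in the generators and their inverses: (x, True) is x, (x, False) is x^-1.\<close>
type_synonym 'a word = "('a \<times> bool) list"

definition words_on :: "'a set \<Rightarrow> 'a word set" where
  "words_on V = {w. \<forall>l \<in> set w. fst l \<in> V}"

inductive pc_step :: "('a \<Rightarrow> 'a \<Rightarrow> bool) \<Rightarrow> 'a word \<Rightarrow> 'a word \<Rightarrow> bool" for E where
  cancel: "pc_step E (xs @ [(a, e), (a, \<not> e)] @ ys) (xs @ ys)"
| swap: "E a c \<Longrightarrow> pc_step E (xs @ [(a, e), (c, d)] @ ys) (xs @ [(c, d), (a, e)] @ ys)"

definition pc_rel :: "'a set \<Rightarrow> ('a \<Rightarrow> 'a \<Rightarrow> bool) \<Rightarrow> ('a word \<times> 'a word) set" where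
  "pc_rel V E = ({(u, v). u \<in> words_on V \<and> v \<in> words_on V \<and> (pc_step E u v \<or> pc_step E v u)})\<^sup>*
                 \<inter> (words_on V \<times> words_on V)"

definition pc_group :: "'a set \<Rightarrow> ('a \<Rightarrow> 'a \<Rightarrow> bool) \<Rightarrow> 'a word set monoid" where
  "pc_group V E =
     \<lparr> carrier = words_on V // pc_rel V E,
       mult = (\<lambda>A B. \<Union>u\<in>A. \<Union>v\<in>B. pc_rel V E `` {u @ v}),
       one = pc_rel V E `` {[]} \<rparr>"

definition centraliser :: "('g, 'b) monoid_scheme \<Rightarrow> 'g set \<Rightarrow> 'g set" where
  "centraliser H S = {g \<in> carrier H. \<forall>s \<in> S. g \<otimes>\<^bsub>H\<^esub> s = s \<otimes>\<^bsub>H\<^esub> g}"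

definition is_centraliser :: "('g, 'b) monoid_scheme \<Rightarrow> 'g set \<Rightarrow> bool" where
  "is_centraliser H C \<longleftrightarrow> (\<exists>S \<subseteq> carrier H. C = centraliser H S)"

definition has_centraliser_chain :: "('g, 'b) monoid_scheme \<Rightarrow> nat \<Rightarrow> bool" where
  "has_centraliser_chain H k \<longleftrightarrow>
     (\<exists>C :: nat \<Rightarrow> 'g set. (\<forall>i \<le> k. is_centraliser H (C i)) \<and> (\<forall>i < k. C (Suc i) \<subset> C i))"

definition cdim_eq :: "('g, 'b) monoid_scheme \<Rightarrow> nat \<Rightarrow> bool" where
  "cdim_eq H k \<longleftrightarrow> has_centraliser_chain H k \<and> (\<forall>m. has_centraliser_chain H m \<longrightarrow> m \<le> k)"

end

theory Submission
  imports Defs "HOL-Computational_Algebra.Polynomial"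
begin



lemma words_on_append[simp]: "xs @ ys \<in> words_on V \<longleftrightarrow> xs \<in> words_on V \<and> ys \<in> words_on V"
  by (auto simp: words_on_def)

lemma words_on_Cons[simp]: "x # ys \<in> words_on V \<longleftrightarrow> fst x \<in> V \<and> ys \<in> words_on V"
  by (auto simp: words_on_def)

lemma words_on_Nil[simp]: "[] \<in> words_on V"
  by (auto simp: words_on_def)

definition R0 :: "'a set \<Rightarrow> ('a \<Rightarrow> 'a \<Rightarrow> bool) \<Rightarrow> ('a word \<times> 'a word) set" where
  "R0 V E = {(u, v). u \<in> words_on V \<and> v \<in> words_on V \<and> (pc_step E u v \<or> pc_step E v u)}"

lemma pc_rel_R0: "pc_rel V E = (R0 V E)\<^sup>* \<inter> (words_on V \<times> words_on V)"
  by (simp add: pc_rel_def R0_def)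

lemma sym_R0: "sym (R0 V E)"
  by (auto simp: R0_def sym_def)

lemma equiv_pc_rel: "equiv (words_on V) (pc_rel V E)"
proof (rule equivI)
  show "pc_rel V E \<subseteq> words_on V \<times> words_on V" by (auto simp: pc_rel_def)
  show "refl_on (words_on V) (pc_rel V E)"
    by (auto simp: refl_on_def pc_rel_def)
  show "sym (pc_rel V E)"
    using sym_rtrancl[OF sym_R0[of V E]] by (auto simp: pc_rel_R0 sym_def)
  show "trans (pc_rel V E)"
    by (auto simp: pc_rel_R0 trans_def)
qed

lemma pc_rel_refl: "u \<in> words_on V \<Longrightarrow> (u, u) \<in> pc_rel V E"
  by (simp add: pc_rel_R0)

lemma pc_rel_sym: "(u, v) \<in> pc_rel V E \<Longrightarrow> (v, u) \<in> pc_rel V E"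
  using equiv_pc_rel[of V E] by (meson equivE symD)

lemma pc_rel_trans: "(u, v) \<in> pc_rel V E \<Longrightarrow> (v, w) \<in> pc_rel V E \<Longrightarrow> (u, w) \<in> pc_rel V E"
  using equiv_pc_rel[of V E] by (meson equivE transD)

lemma pc_rel_words: "(u, v) \<in> pc_rel V E \<Longrightarrow> u \<in> words_on V \<and> v \<in> words_on V"
  by (simp add: pc_rel_R0)

lemma step_ctx: assumes "pc_step E u v" shows "pc_step E (x @ u @ y) (x @ v @ y)"
  using assms
proof (cases rule: pc_step.cases)
  case (cancel xs a e ys)
  then show ?thesis using pc_step.cancel[of E "x @ xs" a e "ys @ y"] by simp
next
  case (swap a c xs e d ys)
  then show ?thesis using pc_step.swap[of E a c "x @ xs" e d "ys @ y"] by simp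
qed

lemma step_rel: "pc_step E u v \<Longrightarrow> u \<in> words_on V \<Longrightarrow> v \<in> words_on V \<Longrightarrow> (u, v) \<in> pc_rel V E"
  by (auto simp: pc_rel_R0 R0_def)

lemma rel_ctx:
  assumes "(u, v) \<in> pc_rel V E" "x \<in> words_on V" "y \<in> words_on V"
  shows "(x @ u @ y, x @ v @ y) \<in> pc_rel V E"
proof -
  have "(u, v) \<in> (R0 V E)\<^sup>*" using assms(1) by (simp add: pc_rel_R0)
  then have "(x @ u @ y, x @ v @ y) \<in> (R0 V E)\<^sup>*"
  proof (induction rule: rtrancl_induct)
    case base then show ?case by simp
  next
    case (step v w)
    then have "(x @ v @ y, x @ w @ y) \<in> R0 V E"
      using assms(2,3) step_ctx[of E v w x y] step_ctx[of E w v x y] by (auto simp: R0_def)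
    then show ?case using step.IH by (meson rtrancl.rtrancl_into_rtrancl)
  qed
  then show ?thesis using assms pc_rel_words[OF assms(1)] by (simp add: pc_rel_R0)
qed

lemma rel_append:
  assumes "(u, u') \<in> pc_rel V E" "(v, v') \<in> pc_rel V E"
  shows "(u @ v, u' @ v') \<in> pc_rel V E"
proof -
  have w: "u \<in> words_on V" "u' \<in> words_on V" "v \<in> words_on V" "v' \<in> words_on V"
    using pc_rel_words[OF assms(1)] pc_rel_words[OF assms(2)] by auto
  have 1: "(u @ v, u' @ v) \<in> pc_rel V E"
    using rel_ctx[OF assms(1) words_on_Nil w(3)] by simp
  have 2: "(u' @ v, u' @ v') \<in> pc_rel V E"
    using rel_ctx[OF assms(2) w(2) words_on_Nil] by simp
  show ?thesis by (rule pc_rel_trans[OF 1 2])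
qed

abbreviation cls :: "'a set \<Rightarrow> ('a \<Rightarrow> 'a \<Rightarrow> bool) \<Rightarrow> 'a word \<Rightarrow> 'a word set" where
  "cls V E u \<equiv> pc_rel V E `` {u}"

lemma cls_mult:
  assumes "u \<in> words_on V" "v \<in> words_on V"
  shows "cls V E u \<otimes>\<^bsub>pc_group V E\<^esub> cls V E v = cls V E (u @ v)"
proof -
  have H: "cls V E (u' @ v') = cls V E (u @ v)" if "u' \<in> cls V E u" "v' \<in> cls V E v" for u' v'
  proof -
    have "(u, u') \<in> pc_rel V E" "(v, v') \<in> pc_rel V E" using that by auto
    then have "(u @ v, u' @ v') \<in> pc_rel V E"
      by (rule rel_append)
    then have "cls V E (u @ v) = cls V E (u' @ v')"
      by (rule equiv_class_eq[OF equiv_pc_rel])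
    then show ?thesis by simp
  qed
  have u: "u \<in> cls V E u" and v: "v \<in> cls V E v" using assms by (auto intro: pc_rel_refl)
  have "(\<Union>u'\<in>cls V E u. \<Union>v'\<in>cls V E v. cls V E (u' @ v')) = (\<Union>u'\<in>cls V E u. \<Union>v'\<in>cls V E v. cls V E (u @ v))"
    using H by (intro SUP_cong refl) 
  also have "\<dots> = cls V E (u @ v)" using u v by auto
  finally show ?thesis by (simp add: pc_group_def)
qed

lemma cls_carrier: "u \<in> words_on V \<Longrightarrow> cls V E u \<in> carrier (pc_group V E)"
  by (auto simp: pc_group_def quotient_def)

lemma carrier_cls: "X \<in> carrier (pc_group V E) \<Longrightarrow> \<exists>u \<in> words_on V. X = cls V E u"
  by (auto simp: pc_group_def quotient_def)

lemma cls_eq_iff: "u \<in> words_on V \<Longrightarrow> v \<in> words_on V \<Longrightarrow> cls V E u = cls V E v \<longleftrightarrow> (u, v) \<in> pc_rel V E"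
  by (rule eq_equiv_class_iff[OF equiv_pc_rel])

lemma cls_comm_iff:
  assumes "u \<in> words_on V" "v \<in> words_on V"
  shows "cls V E u \<otimes>\<^bsub>pc_group V E\<^esub> cls V E v = cls V E v \<otimes>\<^bsub>pc_group V E\<^esub> cls V E u
     \<longleftrightarrow> (u @ v, v @ u) \<in> pc_rel V E"
  using assms by (simp add: cls_mult cls_eq_iff)




datatype 'r m2 = M2 'r 'r 'r 'r

fun mm :: "'r::comm_ring_1 m2 \<Rightarrow> 'r m2 \<Rightarrow> 'r m2" where
  "mm (M2 a b c d) (M2 a' b' c' d') = M2 (a*a' + b*c') (a*b' + b*d') (c*a' + d*c') (c*b' + d*d')"

definition I2 :: "'r::comm_ring_1 m2" where "I2 = M2 1 0 0 1"

lemma mm_assoc: "mm (mm A B) C = mm A (mm B C)"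
  by (cases A; cases B; cases C) (simp add: algebra_simps)

lemma mm_I2[simp]: "mm I2 A = A" "mm A I2 = A"
  by (cases A; simp add: I2_def)+

definition ev :: "('a \<times> bool \<Rightarrow> 'r::comm_ring_1 m2) \<Rightarrow> 'a word \<Rightarrow> 'r m2" where
  "ev f w = foldr (\<lambda>l A. mm (f l) A) w I2"

lemma ev_Nil[simp]: "ev f [] = I2" by (simp add: ev_def)
lemma ev_Cons[simp]: "ev f (l # w) = mm (f l) (ev f w)" by (simp add: ev_def)
lemma ev_append: "ev f (xs @ ys) = mm (ev f xs) (ev f ys)"
  by (induction xs) (auto simp: mm_assoc)

lemma ev_step:
  assumes inv: "\<And>a e. mm (f (a, e)) (f (a, \<not> e)) = I2"
    and com: "\<And>a c e d. E a c \<Longrightarrow> mm (f (a, e)) (f (c, d)) = mm (f (c, d)) (f (a, e))"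
    and st: "pc_step E u v"
  shows "ev f u = ev f v"
  using st
proof (cases rule: pc_step.cases)
  case (cancel xs a e ys)
  then show ?thesis by (simp add: ev_append inv flip: mm_assoc)
next
  case (swap a c xs e d ys)
  have "mm (f (a, e)) (mm (f (c, d)) X) = mm (f (c, d)) (mm (f (a, e)) X)" for X
    by (simp add: com[OF swap(3)] flip: mm_assoc)
  then show ?thesis using swap by (simp add: ev_append)
qed

lemma ev_rel:
  assumes inv: "\<And>a e. mm (f (a, e)) (f (a, \<not> e)) = I2"
    and com: "\<And>a c e d. E a c \<Longrightarrow> mm (f (a, e)) (f (c, d)) = mm (f (c, d)) (f (a, e))"
    and r: "(u, v) \<in> pc_rel V E"
  shows "ev f u = ev f v"
proof -
  have "(u, v) \<in> (R0 V E)\<^sup>*" using r by (simp add: pc_rel_R0)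
  then show ?thesis
  proof (induction rule: rtrancl_induct)
    case base then show ?case by simp
  next
    case (step v w)
    then have "pc_step E v w \<or> pc_step E w v" by (simp add: R0_def)
    then have "ev f v = ev f w" using ev_step[of f E, OF inv com] by metis
    then show ?case using step.IH by simp
  qed
qed

definition es :: "'a word \<Rightarrow> 'a \<Rightarrow> int" where
  "es w v = int (count_list w (v, True)) - int (count_list w (v, False))"

lemma es_append: "es (xs @ ys) v = es xs v + es ys v"
  by (simp add: es_def)

lemma es_Cons: "es (l # w) v = (if fst l = v then (if snd l then 1 else -1) else 0) + es w v"
  by (cases l) (auto simp: es_def)

lemma es_Nil[simp]: "es [] v = 0" by (simp add: es_def)

lemma es_step: assumes "pc_step E u v" shows "es u = es v"
  using assms
proof (cases rule: pc_step.cases)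
  case (cancel xs a e ys)
  then show ?thesis by (auto simp: fun_eq_iff es_append es_Cons)
next
  case (swap a c xs e d ys)
  then show ?thesis by (auto simp: fun_eq_iff es_append es_Cons)
qed

lemma es_rel:
  assumes r: "(u, v) \<in> pc_rel V E"
  shows "es u = es v"
proof -
  have "(u, v) \<in> (R0 V E)\<^sup>*" using r by (simp add: pc_rel_R0)
  then show ?thesis
  proof (induction rule: rtrancl_induct)
    case base then show ?case by simp
  next
    case (step v w)
    then have "pc_step E v w \<or> pc_step E w v" by (simp add: R0_def)
    then have "es v = es w" using es_step by metis
    then show ?case using step.IH by simp
  qed
qed

section \<open>Branch with a 4-chain\<close>

lemma fsg_sym: "fin_simple_graph V E \<Longrightarrow> E a b \<Longrightarrow> E b a"
  by (simp add: fin_simple_graph_def)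
lemma fsg_irr: "fin_simple_graph V E \<Longrightarrow> \<not> E a a"
  by (simp add: fin_simple_graph_def)
lemma fsg_V: "fin_simple_graph V E \<Longrightarrow> E a b \<Longrightarrow> a \<in> V \<and> b \<in> V"
  by (simp add: fin_simple_graph_def)

definition fpq :: "'a \<Rightarrow> 'a \<Rightarrow> 'a \<times> bool \<Rightarrow> int m2" where
  "fpq p q l = (if fst l = p then (if snd l then M2 1 1 0 1 else M2 1 (-1) 0 1)
     else if fst l = q then (if snd l then M2 1 0 1 1 else M2 1 0 (-1) 1) else I2)"

lemma noncomm_letters:
  assumes G: "fin_simple_graph V E" and "p \<noteq> q" "\<not> E p q"
  shows "([(p, True), (q, True)], [(q, True), (p, True)]) \<notin> pc_rel V E"
proof
  assume r: "([(p, True), (q, True)], [(q, True), (p, True)]) \<in> pc_rel V E"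
  have inv: "\<And>a e. mm (fpq p q (a, e)) (fpq p q (a, \<not> e)) = I2"
    by (auto simp: fpq_def I2_def)
  have com: "\<And>a c e d. E a c \<Longrightarrow> mm (fpq p q (a, e)) (fpq p q (c, d)) = mm (fpq p q (c, d)) (fpq p q (a, e))"
  proof -
    fix a c e d assume ac: "E a c"
    then have "a \<noteq> c" using fsg_irr[OF G] by metis
    moreover have "\<not> (a = p \<and> c = q)" "\<not> (a = q \<and> c = p)"
      using ac assms fsg_sym[OF G] by metis+
    ultimately show "mm (fpq p q (a, e)) (fpq p q (c, d)) = mm (fpq p q (c, d)) (fpq p q (a, e))"
      by (cases "a = p"; cases "a = q"; cases "c = p"; cases "c = q") (auto simp: fpq_def)
  qed
  have "ev (fpq p q) [(p, True), (q, True)] = ev (fpq p q) [(q, True), (p, True)]"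
    by (rule ev_rel[OF inv com r])
  then show False using assms(2) by (simp add: fpq_def I2_def)
qed

lemma comm_letters:
  assumes G: "fin_simple_graph V E" and "E p q"
  shows "([(p, True), (q, True)], [(q, True), (p, True)]) \<in> pc_rel V E"
proof -
  have "pc_step E ([] @ [(p, True), (q, True)] @ []) ([] @ [(q, True), (p, True)] @ [])"
    by (rule pc_step.swap[of E p q "[]" True True "[]", OF assms(2)])
  then show ?thesis using fsg_V[OF G assms(2)] by (intro step_rel) auto
qed

abbreviation gen :: "'a set \<Rightarrow> ('a \<Rightarrow> 'a \<Rightarrow> bool) \<Rightarrow> 'a \<Rightarrow> 'a word set" where
  "gen V E p \<equiv> cls V E [(p, True)]"

lemma gen_comm:
  assumes G: "fin_simple_graph V E" and "p \<in> V" "q \<in> V"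
  shows "gen V E p \<otimes>\<^bsub>pc_group V E\<^esub> gen V E q = gen V E q \<otimes>\<^bsub>pc_group V E\<^esub> gen V E p
     \<longleftrightarrow> p = q \<or> E p q"
proof -
  have "gen V E p \<otimes>\<^bsub>pc_group V E\<^esub> gen V E q = gen V E q \<otimes>\<^bsub>pc_group V E\<^esub> gen V E p
     \<longleftrightarrow> ([(p, True), (q, True)], [(q, True), (p, True)]) \<in> pc_rel V E"
    using cls_comm_iff[of "[(p, True)]" V "[(q, True)]" E] assms by simp
  also have "\<dots> \<longleftrightarrow> p = q \<or> E p q"
    using noncomm_letters[OF G, of p q] comm_letters[OF G, of p q] pc_rel_refl[of "[(p, True), (p, True)]" V E] assms
    by auto
  finally show ?thesis .
qed

lemma gen_in_centraliser:
  assumes G: "fin_simple_graph V E" and "p \<in> V" "T \<subseteq> V"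
  shows "gen V E p \<in> centraliser (pc_group V E) (gen V E ` T) \<longleftrightarrow> (\<forall>t\<in>T. p = t \<or> E p t)"
  using assms gen_comm[OF G] by (auto simp: centraliser_def cls_carrier subset_iff)

lemma centraliser_anti: "S \<subseteq> S' \<Longrightarrow> centraliser H S' \<subseteq> centraliser H S"
  by (auto simp: centraliser_def)

lemma chain4:
  assumes G: "fin_simple_graph V E" and ab: "E a b" and bc: "E b c" and "a \<noteq> c" "\<not> E a c"
    and "d \<in> V" "d \<noteq> b" "\<not> E b d"
  shows "has_centraliser_chain (pc_group V E) 4"
proof -
  have V: "a \<in> V" "b \<in> V" "c \<in> V" using fsg_V[OF G ab] fsg_V[OF G bc] by auto
  define T :: "nat \<Rightarrow> 'a set" where "T i = (if i = 0 then {} else if i = 1 then {b} else if i = 2 then {b, c}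
      else if i = 3 then {a, b, c} else {a, b, c, d})" for i
  define C where "C i = centraliser (pc_group V E) (gen V E ` T i)" for i
  have TV: "T i \<subseteq> V" for i using V assms(6) by (auto simp: T_def)
  have isc: "is_centraliser (pc_group V E) (C i)" for i
    unfolding is_centraliser_def C_def using TV[of i] by (intro exI[of _ "gen V E ` T i"]) (auto intro!: cls_carrier)
  have mono: "C (Suc i) \<subseteq> C i" if "i < 4" for i
    unfolding C_def by (rule centraliser_anti) (use that in \<open>auto simp: T_def\<close>)
  have sE: "E x y \<Longrightarrow> E y x" for x y using fsg_sym[OF G] by metis
  have nE: "\<not> E x x" for x using fsg_irr[OF G] by metis
  have bnc: "b \<noteq> c" using bc nE by metis
  have bna: "b \<noteq> a" using ab nE by metis
  have w: "\<exists>g. g \<in> C i \<and> g \<notin> C (Suc i)" if "i < 4" for i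
  proof -
    have "i = 0 \<or> i = Suc 0 \<or> i = Suc (Suc 0) \<or> i = Suc (Suc (Suc 0))" using that by auto
    moreover have C0: "C 0 = centraliser (pc_group V E) (gen V E ` {})" by (simp add: C_def T_def)
    moreover have C1: "C (Suc 0) = centraliser (pc_group V E) (gen V E ` {b})" by (simp add: C_def T_def)
    moreover have C2: "C (Suc (Suc 0)) = centraliser (pc_group V E) (gen V E ` {b, c})" by (simp add: C_def T_def)
    moreover have C3: "C (Suc (Suc (Suc 0))) = centraliser (pc_group V E) (gen V E ` {a, b, c})" by (simp add: C_def T_def)
    moreover have C4: "C (Suc (Suc (Suc (Suc 0)))) = centraliser (pc_group V E) (gen V E ` {a, b, c, d})" by (simp add: C_def T_def)
    ultimately show ?thesis
    proof (elim disjE)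
      assume "i = 0" then show ?thesis
        using gen_in_centraliser[OF G assms(6), of "{}"] gen_in_centraliser[OF G assms(6), of "{b}"] V assms sE C0 C1
        by (intro exI[of _ "gen V E d"]) auto
    next
      assume "i = Suc 0" then show ?thesis
        using gen_in_centraliser[OF G V(1), of "{b}"] gen_in_centraliser[OF G V(1), of "{b, c}"] V assms sE C1 C2
        by (intro exI[of _ "gen V E a"]) auto
    next
      assume "i = Suc (Suc 0)" then show ?thesis
        using gen_in_centraliser[OF G V(3), of "{b, c}"] gen_in_centraliser[OF G V(3), of "{a, b, c}"] V assms sE bnc C2 C3
        by (intro exI[of _ "gen V E c"]) auto
    next
      assume "i = Suc (Suc (Suc 0))" then show ?thesis
        using gen_in_centraliser[OF G V(2), of "{a, b, c}"] gen_in_centraliser[OF G V(2), of "{a, b, c, d}"] V assms sE bna bnc C3 C4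
        by (intro exI[of _ "gen V E b"]) auto
    qed
  qed
  have "\<forall>i<4. C (Suc i) \<subset> C i" using mono w by blast
  then show ?thesis unfolding has_centraliser_chain_def using isc by blast
qed




lemma decomp:
  assumes "(a, True) \<in> set xs" "(a, False) \<in> set xs"
  shows "\<exists>p m q e. xs = p @ [(a, e)] @ m @ [(a, \<not> e)] @ q \<and> (\<forall>l\<in>set m. fst l \<noteq> a)"
  using assms
proof (induction xs)
  case Nil then show ?case by simp
next
  case (Cons x xs)
  show ?case
  proof (cases "fst x = a")
    case True
    obtain e0 where x: "x = (a, e0)" using True by (cases x) auto
    have "(a, \<not> e0) \<in> set xs" using Cons.prems x by (cases e0) auto
    then have "\<exists>l\<in>set xs. fst l = a" by force
    then obtain m l q where xs: "xs = m @ l # q" and l: "fst l = a" and m: "\<forall>y\<in>set m. fst y \<noteq> a"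
      using split_list_first_prop[of xs "\<lambda>l. fst l = a"] by blast
    obtain e1 where l1: "l = (a, e1)" using l by (cases l) auto
    show ?thesis
    proof (cases "e1 = e0")
      case False
      then have "x # xs = [] @ [(a, e0)] @ m @ [(a, \<not> e0)] @ q" using x xs l1 by (cases e0; cases e1) auto
      then show ?thesis using m by blast
    next
      case True
      have "(a, e0) \<in> set xs" using xs l1 True by auto
      then have "(a, True) \<in> set xs" "(a, False) \<in> set xs" using \<open>(a, \<not> e0) \<in> set xs\<close> by (cases e0; auto)+
      then obtain p m q e where "xs = p @ [(a, e)] @ m @ [(a, \<not> e)] @ q" "\<forall>l\<in>set m. fst l \<noteq> a"
        using Cons.IH by blast
      then have "x # xs = (x # p) @ [(a, e)] @ m @ [(a, \<not> e)] @ q" "\<forall>l\<in>set m. fst l \<noteq> a" by simp_all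
      then show ?thesis by blast
    qed
  next
    case False
    then have "(a, True) \<in> set xs" "(a, False) \<in> set xs" using Cons.prems by auto
    then obtain p m q e where "xs = p @ [(a, e)] @ m @ [(a, \<not> e)] @ q" "\<forall>l\<in>set m. fst l \<noteq> a"
      using Cons.IH by blast
    then have "x # xs = (x # p) @ [(a, e)] @ m @ [(a, \<not> e)] @ q" "\<forall>l\<in>set m. fst l \<noteq> a" by simp_all
    then show ?thesis by blast
  qed
qed

lemma move_right:
  assumes "a \<in> V" "m \<in> words_on V" "\<forall>l\<in>set m. E a (fst l)"
  shows "([(a, e)] @ m, m @ [(a, e)]) \<in> pc_rel V E"
  using assms(2,3)
proof (induction m)
  case Nil then show ?case using assms(1) by (simp add: pc_rel_refl)
next
  case (Cons l m)
  obtain c d where l: "l = (c, d)" by (cases l)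
  have "E a c" using Cons.prems l by auto
  then have "pc_step E ([] @ [(a, e), (c, d)] @ m) ([] @ [(c, d), (a, e)] @ m)"
    by (rule pc_step.swap)
  then have 1: "([(a, e), l] @ m, [l, (a, e)] @ m) \<in> pc_rel V E"
    using Cons.prems assms(1) l by (intro step_rel) auto
  have "([(a, e)] @ m, m @ [(a, e)]) \<in> pc_rel V E" using Cons by auto
  then have 2: "([l] @ ([(a, e)] @ m) @ [], [l] @ (m @ [(a, e)]) @ []) \<in> pc_rel V E"
    using Cons.prems l by (intro rel_ctx) auto
  show ?case using pc_rel_trans[OF 1] 2 by simp
qed

lemma move_left:
  assumes "a \<in> V" "m \<in> words_on V" "\<forall>l\<in>set m. E a (fst l)"
  shows "(m @ [(a, e)], [(a, e)] @ m) \<in> pc_rel V E"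
  using move_right[of a V m E e, OF assms] pc_rel_sym by blast

lemma es_nonzero_in: "es w v \<noteq> 0 \<Longrightarrow> \<exists>l\<in>set w. fst l = v"
  by (induction w) (auto simp: es_Cons split: if_splits)

lemma collapse:
  assumes G: "fin_simple_graph V E"
  shows "w \<in> words_on V \<Longrightarrow> (\<forall>l\<in>set w. \<forall>l'\<in>set w. fst l = fst l' \<or> E (fst l) (fst l'))
    \<Longrightarrow> (\<forall>v. es w v = 0) \<Longrightarrow> (w, []) \<in> pc_rel V E"
proof (induction "length w" arbitrary: w rule: less_induct)
  case less
  show ?case
  proof (cases w)
    case Nil then show ?thesis by (simp add: pc_rel_refl)
  next
    case (Cons l w0)
    define a where "a = fst l"
    have "es w a = 0" using less.prems by auto
    then have cnt: "count_list w (a, True) = count_list w (a, False)" by (simp add: es_def)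
    have "(a, snd l) \<in> set w" using Cons a_def by (cases l) auto
    then have "count_list w (a, snd l) \<noteq> 0" using count_list_0_iff by metis
    then have "count_list w (a, True) \<noteq> 0 \<and> count_list w (a, False) \<noteq> 0"
      using cnt by (cases "snd l") auto
    then have A: "(a, True) \<in> set w" and B: "(a, False) \<in> set w"
      using count_list_0_iff by metis+
    obtain p m q e where w: "w = p @ [(a, e)] @ m @ [(a, \<not> e)] @ q" and m: "\<forall>l\<in>set m. fst l \<noteq> a"
      using decomp[OF A B] by auto
    have aV: "a \<in> V" using less.prems(1) w by auto
    have mw: "m \<in> words_on V" using less.prems(1) w by auto
    have mE: "\<forall>l'\<in>set m. E a (fst l')" using less.prems(2) w m by fastforce
    have 1: "([(a, e)] @ m, m @ [(a, e)]) \<in> pc_rel V E" by (rule move_right[of a V m E e, OF aV mw mE])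
    have 2: "(p @ (a, e) # m @ (a, \<not> e) # q, p @ m @ (a, e) # (a, \<not> e) # q) \<in> pc_rel V E"
      using rel_ctx[OF 1, of p "[(a, \<not> e)] @ q"] less.prems(1) w by simp
    have "pc_step E ((p @ m) @ [(a, e), (a, \<not> e)] @ q) ((p @ m) @ q)"
      by (rule pc_step.cancel)
    then have "((p @ m) @ [(a, e), (a, \<not> e)] @ q, (p @ m) @ q) \<in> pc_rel V E"
      using less.prems(1) w by (intro step_rel) auto
    then have 3: "(p @ m @ (a, e) # (a, \<not> e) # q, p @ m @ q) \<in> pc_rel V E" by simp
    have 4: "(p @ m @ q, []) \<in> pc_rel V E"
    proof (rule less.hyps)
      show "length (p @ m @ q) < length w" using w by simp
      show "p @ m @ q \<in> words_on V" using less.prems(1) w by auto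
      show "\<forall>l\<in>set (p @ m @ q). \<forall>l'\<in>set (p @ m @ q). fst l = fst l' \<or> E (fst l) (fst l')"
        using less.prems(2) w by auto
      show "\<forall>v. es (p @ m @ q) v = 0"
      proof
        fix v
        have "es w v = es (p @ m @ q) v" using w by (cases e) (auto simp: es_append es_Cons)
        then show "es (p @ m @ q) v = 0" using less.prems(3) by simp
      qed
    qed
    have "(w, p @ m @ q) \<in> pc_rel V E"
      using pc_rel_trans[OF 2 3] w by simp
    then show ?thesis using pc_rel_trans[OF _ 4] by blast
  qed
qed

definition winv :: "'a word \<Rightarrow> 'a word" where
  "winv w = rev (map (\<lambda>l. (fst l, \<not> snd l)) w)"

lemma winv_words: "w \<in> words_on V \<Longrightarrow> winv w \<in> words_on V"
  by (auto simp: winv_def words_on_def)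

lemma winv_Cons: "winv (l # w) = winv w @ [(fst l, \<not> snd l)]"
  by (simp add: winv_def)

lemma es_winv: "es (winv w) v = - es w v"
  by (induction w) (auto simp: winv_Cons es_append es_Cons winv_def)

lemma w_winv: "w \<in> words_on V \<Longrightarrow> (w @ winv w, []) \<in> pc_rel V E"
proof (induction w)
  case Nil then show ?case by (simp add: winv_def pc_rel_refl)
next
  case (Cons l w)
  obtain a e where l: "l = (a, e)" by (cases l)
  have 1: "([l] @ (w @ winv w) @ [(a, \<not> e)], [l] @ [] @ [(a, \<not> e)]) \<in> pc_rel V E"
    using Cons l by (intro rel_ctx) auto
  have "pc_step E ([] @ [(a, e), (a, \<not> e)] @ []) ([] @ [])" by (rule pc_step.cancel)
  then have 2: "([(a, e), (a, \<not> e)], []) \<in> pc_rel V E" using Cons l by (intro step_rel) auto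
  show ?case using pc_rel_trans[OF 1] 2 l by (simp add: winv_Cons)
qed

lemma winv_winv: "winv (winv w) = w"
  by (simp add: winv_def rev_map comp_def)

lemma winv_w: "w \<in> words_on V \<Longrightarrow> (winv w @ w, []) \<in> pc_rel V E"
  using w_winv[of "winv w" V E] winv_words[of w V] by (simp add: winv_winv)

section \<open>Two by two matrices over a domain\<close>

lemma comm_iff:
  fixes a b c d p q r s :: "'r::idom"
  shows "mm (M2 a b c d) (M2 p q r s) = mm (M2 p q r s) (M2 a b c d)
    \<longleftrightarrow> (b * r = c * q \<and> q * (a - d) = b * (p - s) \<and> c * (p - s) = r * (a - d))"
  by (auto simp: algebra_simps)

lemma par_trans:
  fixes u1 u2 u3 v1 v2 v3 w1 w2 w3 :: "'r::idom"
  assumes w: "w1 \<noteq> 0 \<or> w2 \<noteq> 0 \<or> w3 \<noteq> 0"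
    and u: "u1 * w2 = u2 * w1" "u1 * w3 = u3 * w1" "u2 * w3 = u3 * w2"
    and v: "v1 * w2 = v2 * w1" "v1 * w3 = v3 * w1" "v2 * w3 = v3 * w2"
  shows "u1 * v2 = u2 * v1 \<and> u1 * v3 = u3 * v1 \<and> u2 * v3 = u3 * v2"
proof -
  have h: "w1 * w1 * (u1 * v2 - u2 * v1) = 0"
    "w1 * w1 * (u1 * v3 - u3 * v1) = 0"
    "w1 * w1 * (u2 * v3 - u3 * v2) = 0"
    "w2 * w2 * (u1 * v2 - u2 * v1) = 0"
    "w2 * w2 * (u1 * v3 - u3 * v1) = 0"
    "w2 * w2 * (u2 * v3 - u3 * v2) = 0"
    "w3 * w3 * (u1 * v2 - u2 * v1) = 0"
    "w3 * w3 * (u1 * v3 - u3 * v1) = 0"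
    "w3 * w3 * (u2 * v3 - u3 * v2) = 0"
    using u v by algebra+
  have "u1 * v2 - u2 * v1 = 0" "u1 * v3 - u3 * v1 = 0" "u2 * v3 - u3 * v2 = 0"
    using w h by (auto simp: mult_eq_0_iff)
  then show ?thesis by simp
qed

lemma commutant:
  fixes A B C :: "'r::idom m2"
  assumes AB: "mm A B = mm B A" and CB: "mm C B = mm B C"
    and ns: "\<not> (\<exists>x. B = M2 x 0 0 x)"
  shows "mm A C = mm C A"
proof -
  obtain a b c d where B: "B = M2 a b c d" by (cases B)
  obtain p q r s where A: "A = M2 p q r s" by (cases A)
  obtain p' q' r' s' where C: "C = M2 p' q' r' s'" by (cases C)
  have w: "b \<noteq> 0 \<or> c \<noteq> 0 \<or> a - d \<noteq> 0" using ns B by auto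
  have 1: "b * r = c * q \<and> q * (a - d) = b * (p - s) \<and> c * (p - s) = r * (a - d)"
    using AB comm_iff[of a b c d p q r s] A B by (simp add: eq_commute[of "mm A B"])
  have 2: "b * r' = c * q' \<and> q' * (a - d) = b * (p' - s') \<and> c * (p' - s') = r' * (a - d)"
    using CB comm_iff[of a b c d p' q' r' s'] C B by (simp add: eq_commute[of "mm C B"])
  have "q * r' = r * q' \<and> q * (p' - s') = (p - s) * q' \<and> r * (p' - s') = (p - s) * r'"
    using par_trans[of b c "a - d" q r "p - s" q' r' "p' - s'"] w 1 2 by (auto simp: algebra_simps)
  then show ?thesis using A C comm_iff[of p q r s p' q' r' s'] by (auto simp: algebra_simps)
qed

lemma scalar_comm: "mm (M2 x 0 0 x) A = mm A (M2 x 0 0 x)"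
  by (cases A) (simp add: algebra_simps)

section \<open>Abstract: commutative transitivity modulo the centre bounds chains\<close>

lemma no_chain3:
  assumes CT: "\<And>x y z. x \<in> carrier H \<Longrightarrow> y \<in> carrier H \<Longrightarrow> z \<in> carrier H \<Longrightarrow>
     x \<otimes>\<^bsub>H\<^esub> y = y \<otimes>\<^bsub>H\<^esub> x \<Longrightarrow> y \<otimes>\<^bsub>H\<^esub> z = z \<otimes>\<^bsub>H\<^esub> y \<Longrightarrow>
     (\<exists>g\<in>carrier H. y \<otimes>\<^bsub>H\<^esub> g \<noteq> g \<otimes>\<^bsub>H\<^esub> y) \<Longrightarrow> x \<otimes>\<^bsub>H\<^esub> z = z \<otimes>\<^bsub>H\<^esub> x"
  shows "\<not> has_centraliser_chain H 3"
proof
  assume "has_centraliser_chain H 3"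
  then obtain C where isc: "\<forall>i\<le>3. is_centraliser H (C i)" and ch: "\<forall>i<3. C (Suc i) \<subset> C i"
    by (auto simp: has_centraliser_chain_def)
  have "\<forall>i\<in>{0,1,2,3::nat}. \<exists>S\<subseteq>carrier H. C i = centraliser H S"
    using isc by (auto simp: is_centraliser_def)
  then obtain S0 S1 S2 S3 where S: "S0 \<subseteq> carrier H" "S1 \<subseteq> carrier H" "S2 \<subseteq> carrier H" "S3 \<subseteq> carrier H"
    and C: "C 0 = centraliser H S0" "C 1 = centraliser H S1" "C 2 = centraliser H S2" "C 3 = centraliser H S3"
    by (metis insertCI)
  have c10: "C 1 \<subset> C 0" using ch by (metis One_nat_def less_numeral_extra(1) zero_less_numeral)
  have c21: "C 2 \<subset> C 1" using ch[rule_format, of 1] by (simp add: numeral_2_eq_2)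
  have c32: "C 3 \<subset> C 2" using ch[rule_format, of 2] by (simp add: numeral_3_eq_3 numeral_2_eq_2)
  obtain g where g: "g \<in> C 0" "g \<notin> C 1" using c10 by blast
  have gH: "g \<in> carrier H" using g C by (auto simp: centraliser_def)
  obtain s where s: "s \<in> S1" "g \<otimes>\<^bsub>H\<^esub> s \<noteq> s \<otimes>\<^bsub>H\<^esub> g"
    using g gH C by (auto simp: centraliser_def)
  have sH: "s \<in> carrier H" using s S by auto
  have s_nc: "\<exists>g\<in>carrier H. s \<otimes>\<^bsub>H\<^esub> g \<noteq> g \<otimes>\<^bsub>H\<^esub> s" using s gH by metis
  obtain y where y: "y \<in> C 2" "y \<notin> C 3" using c32 by blast
  have yH: "y \<in> carrier H" using y C by (auto simp: centraliser_def)
  obtain t where t: "t \<in> S3" "y \<otimes>\<^bsub>H\<^esub> t \<noteq> t \<otimes>\<^bsub>H\<^esub> y"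
    using y yH C by (auto simp: centraliser_def)
  have tH: "t \<in> carrier H" using t S by auto
  have y_nc: "\<exists>g\<in>carrier H. y \<otimes>\<^bsub>H\<^esub> g \<noteq> g \<otimes>\<^bsub>H\<^esub> y" using t tH by metis
  have y1: "y \<in> C 1" using y c21 by blast
  have "C 1 \<subseteq> C 2"
  proof
    fix x assume x: "x \<in> C 1"
    have xH: "x \<in> carrier H" using x C by (auto simp: centraliser_def)
    have xs: "x \<otimes>\<^bsub>H\<^esub> s = s \<otimes>\<^bsub>H\<^esub> x" using x s C by (auto simp: centraliser_def)
    have sy: "s \<otimes>\<^bsub>H\<^esub> y = y \<otimes>\<^bsub>H\<^esub> s" using y1 s C by (auto simp: centraliser_def)
    have xy: "x \<otimes>\<^bsub>H\<^esub> y = y \<otimes>\<^bsub>H\<^esub> x" by (rule CT[OF xH sH yH xs sy s_nc])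
    have "\<forall>u\<in>S2. x \<otimes>\<^bsub>H\<^esub> u = u \<otimes>\<^bsub>H\<^esub> x"
    proof
      fix u assume u: "u \<in> S2"
      have uH: "u \<in> carrier H" using u S by auto
      have yu: "y \<otimes>\<^bsub>H\<^esub> u = u \<otimes>\<^bsub>H\<^esub> y" using y u C by (auto simp: centraliser_def)
      show "x \<otimes>\<^bsub>H\<^esub> u = u \<otimes>\<^bsub>H\<^esub> x" by (rule CT[OF xH yH uH xy yu y_nc])
    qed
    then show "x \<in> C 2" using xH C by (auto simp: centraliser_def)
  qed
  then show False using c21 by blast
qed




fun mv :: "'r::comm_ring_1 m2 \<Rightarrow> 'r \<times> 'r \<Rightarrow> 'r \<times> 'r" where
  "mv (M2 a b c d) v = (a * fst v + b * snd v, c * fst v + d * snd v)"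

lemma mv_mm: "mv (mm A B) v = mv A (mv B v)"
  by (cases A; cases B) (simp add: algebra_simps)

lemma mv_I2[simp]: "mv I2 v = v"
  by (simp add: I2_def)

definition Pm :: "int \<Rightarrow> int poly \<Rightarrow> int poly m2" where
  "Pm c s = M2 (1 - of_int c * s) (of_int c * of_int c * s) (- s) (1 + of_int c * s)"

lemma Pm_mult: "mm (Pm c s) (Pm c s') = Pm c (s + s')"
  by (simp add: Pm_def algebra_simps)

lemma Pm_zero: "Pm c 0 = I2"
  by (simp add: Pm_def I2_def)

definition inB :: "int \<Rightarrow> int poly \<times> int poly \<Rightarrow> bool" where
  "inB c v \<longleftrightarrow> snd v \<noteq> 0 \<and> (of_int c * snd v - fst v = 0 \<or> degree (of_int c * snd v - fst v) < degree (snd v))"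

lemma pingpong:
  assumes nB: "\<not> inB c v" and nz: "v \<noteq> (0, 0)" and s0: "s \<noteq> 0" and sc: "coeff s 0 = 0"
  shows "inB c (mv (Pm c s) v)"
proof -
  obtain x y where v: "v = (x, y)" by (cases v)
  define d where "d = of_int c * y - x"
  have img: "mv (Pm c s) v = (x + of_int c * (s * d), y + s * d)"
    by (simp add: v Pm_def d_def algebra_simps)
  have dd: "of_int c * (y + s * d) - (x + of_int c * (s * d)) = d"
    by (simp add: d_def algebra_simps)
  have dnz: "d \<noteq> 0"
  proof
    assume "d = 0"
    then have "x = of_int c * y" by (simp add: d_def)
    then have "y \<noteq> 0" using nz v by auto
    then show False using nB \<open>d = 0\<close> by (simp add: inB_def v d_def)
  qed
  have degs: "degree s \<noteq> 0"
  proof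
    assume "degree s = 0"
    then have "s = [:coeff s 0:]" using degree_0_id by metis
    then show False using s0 sc by simp
  qed
  have dsd: "degree (s * d) = degree s + degree d" using degree_mult_eq[OF s0 dnz] .
  have main: "y + s * d \<noteq> 0 \<and> degree d < degree (y + s * d)"
  proof (cases "y = 0")
    case True
    then show ?thesis using dsd degs s0 dnz by auto
  next
    case False
    then have "degree y \<le> degree d" using nB dnz by (auto simp: inB_def v d_def)
    then have "degree y < degree (s * d)" using dsd degs by simp
    then have "degree (y + s * d) = degree (s * d)" by (rule degree_add_eq_right)
    then have "degree d < degree (y + s * d)" using dsd degs by simp
    moreover have "y + s * d \<noteq> 0" using calculation by auto
    ultimately show ?thesis by simp
  qed
  show ?thesis unfolding inB_def img using main dd by simp
qed

lemma inB_nz: "inB c v \<Longrightarrow> v \<noteq> (0, 0)"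
  by (auto simp: inB_def)

lemma inB_10: "\<not> inB c (1, 0)"
  by (simp add: inB_def)

lemma inB_disj:
  assumes "c \<noteq> c'" "inB c v"
  shows "\<not> inB c' v"
proof
  assume B': "inB c' v"
  obtain x y where v: "v = (x, y)" by (cases v)
  define d where "d = of_int c * y - x"
  define d' where "d' = of_int c' * y - x"
  have y: "y \<noteq> 0" using assms(2) by (simp add: inB_def v)
  have diff: "d - d' = smult (c - c') y" by (simp add: d_def d'_def of_int_poly smult_diff_left)
  have dg: "degree (d - d') = degree y" using diff assms(1) by simp
  have h1: "d = 0 \<or> degree d < degree y" using assms(2) by (simp add: inB_def v d_def)
  have h2: "d' = 0 \<or> degree d' < degree y" using B' by (simp add: inB_def v d'_def)
  show False
  proof (cases "d = 0")
    case True
    then have "degree d' = degree y" using dg by simp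
    moreover have "d' \<noteq> 0" using True diff y assms(1) by auto
    ultimately show False using h2 by simp
  next
    case False
    note dn = False
    show False
    proof (cases "d' = 0")
      case True
      then have "degree d = degree y" using dg by simp
      then show False using h1 dn by simp
    next
      case False
      then have "degree d < degree y" "degree d' < degree y" using h1 h2 dn by auto
      then show False using degree_diff_le_max[of d d'] dg by simp
    qed
  qed
qed

locale nbg =
  fixes V :: "'a set" and E :: "'a \<Rightarrow> 'a \<Rightarrow> bool" and idx :: "'a \<Rightarrow> nat"
  assumes G: "fin_simple_graph V E" and inj: "inj_on idx V"
    and NB: "\<And>a b c d. E a b \<Longrightarrow> E b c \<Longrightarrow> a \<noteq> c \<Longrightarrow> \<not> E a c \<Longrightarrow> d \<in> V \<Longrightarrow> d \<noteq> b \<Longrightarrow> E b d"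
begin

definition Zc where "Zc = {v \<in> V. \<forall>w\<in>V. w \<noteq> v \<longrightarrow> E v w}"
definition NC where "NC = V - Zc"
definition clq where "clq v = {w \<in> NC. w = v \<or> E v w}"
definition cc :: "'a \<Rightarrow> int" where "cc v = int (Min (idx ` clq v))"
definition mon :: "'a \<times> bool \<Rightarrow> int poly" where
  "mon l = (if snd l then monom 1 (Suc (idx (fst l))) else - monom 1 (Suc (idx (fst l))))"
definition Lt :: "'a \<times> bool \<Rightarrow> int poly m2" where
  "Lt l = (if fst l \<in> NC then Pm (cc (fst l)) (mon l) else I2)"
definition MM :: "'a word \<Rightarrow> int poly m2" where "MM w = ev Lt w"

lemma sE: "E a b \<Longrightarrow> E b a" using fsg_sym[OF G] by metis
lemma nE: "\<not> E a a" using fsg_irr[OF G] by metis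
lemma EV: "E a b \<Longrightarrow> a \<in> V \<and> b \<in> V" using fsg_V[OF G] by metis
lemma finV: "finite V" using G by (simp add: fin_simple_graph_def)

lemma trans_N:
  assumes "b \<in> NC" "E a b" "E b c" "a \<noteq> c"
  shows "E a c"
proof (rule ccontr)
  assume "\<not> E a c"
  then have "\<forall>d\<in>V. d \<noteq> b \<longrightarrow> E b d" using NB assms by blast
  then have "b \<in> Zc" using EV[OF assms(2)] by (auto simp: Zc_def)
  then show False using assms(1) by (simp add: NC_def)
qed

lemma clq_eq:
  assumes "a \<in> NC" "c \<in> NC" "E a c"
  shows "clq a = clq c"
proof -
  have *: "clq a \<subseteq> clq c" if "a \<in> NC" "c \<in> NC" "E a c" for a c
  proof
    fix w assume "w \<in> clq a"
    then have w: "w \<in> NC" "w = a \<or> E a w" by (auto simp: clq_def)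
    have "w = c \<or> E c w"
    proof (cases "w = a")
      case True then show ?thesis using sE that by blast
    next
      case False
      then have "E a w" using w by blast
      moreover have "E c a" using sE that by blast
      ultimately show ?thesis using trans_N[OF that(1), of c w] by blast
    qed
    then show "w \<in> clq c" using w by (simp add: clq_def)
  qed
  show ?thesis using *[OF assms] *[OF assms(2,1) sE[OF assms(3)]] by blast
qed

lemma cc_same: "a \<in> NC \<Longrightarrow> c \<in> NC \<Longrightarrow> E a c \<Longrightarrow> cc a = cc c"
  using clq_eq by (simp add: cc_def)

lemma min_in:
  assumes "a \<in> NC"
  shows "\<exists>w\<in>clq a. idx w = Min (idx ` clq a)"
proof -
  have "finite (clq a)" using finV by (rule finite_subset[rotated]) (auto simp: clq_def NC_def)
  moreover have "a \<in> clq a" using assms by (simp add: clq_def)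
  ultimately have "Min (idx ` clq a) \<in> idx ` clq a" by (intro Min_in) auto
  then show ?thesis by auto
qed

lemma cc_eq:
  assumes a: "a \<in> NC" and c: "c \<in> NC" and eq: "cc a = cc c"
  shows "a = c \<or> E a c"
proof -
  obtain w where w: "w \<in> clq a" "idx w = Min (idx ` clq a)" using min_in[OF a] by blast
  obtain w' where w': "w' \<in> clq c" "idx w' = Min (idx ` clq c)" using min_in[OF c] by blast
  have "idx w = idx w'" using w w' eq by (simp add: cc_def)
  moreover have "w \<in> V" "w' \<in> V" using w w' by (auto simp: clq_def NC_def)
  ultimately have "w = w'" using inj by (simp add: inj_on_def)
  then have wa: "w = a \<or> E a w" and wc: "w = c \<or> E c w" and wN: "w \<in> NC"
    using w w' by (auto simp: clq_def)
  show ?thesis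
  proof (cases "a = c")
    case True then show ?thesis by simp
  next
    case False
    show ?thesis
    proof (cases "w = a")
      case True then show ?thesis using wc False sE by blast
    next
      case wa': False
      show ?thesis
      proof (cases "w = c")
        case True then show ?thesis using wa wa' by blast
      next
        case False
        then have "E a w" "E w c" using wa wc wa' sE by blast+
        then show ?thesis using trans_N[OF wN] \<open>a \<noteq> c\<close> by blast
      qed
    qed
  qed
qed

lemma mon_neg: "mon (a, \<not> e) = - mon (a, e)"
  by (simp add: mon_def)

lemma Lt_inv: "mm (Lt (a, e)) (Lt (a, \<not> e)) = I2"
  by (simp add: Lt_def Pm_mult mon_neg Pm_zero)

lemma Lt_com: "E a c \<Longrightarrow> mm (Lt (a, e)) (Lt (c, d)) = mm (Lt (c, d)) (Lt (a, e))"
  using cc_same[of a c] by (auto simp: Lt_def Pm_mult add.commute)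

lemma MM_rel: "(u, v) \<in> pc_rel V E \<Longrightarrow> MM u = MM v"
  unfolding MM_def by (rule ev_rel[of Lt E, OF Lt_inv Lt_com])

lemma MM_append: "MM (u @ v) = mm (MM u) (MM v)"
  by (simp add: MM_def ev_append)

lemma MM_Nil[simp]: "MM [] = I2" by (simp add: MM_def)
lemma MM_Cons: "MM (l # w) = mm (Lt l) (MM w)" by (simp add: MM_def)

lemma MM_central: "\<forall>l\<in>set c. fst l \<notin> NC \<Longrightarrow> MM c = I2"
  by (induction c) (auto simp: MM_Cons Lt_def)

definition kk :: "'a word \<Rightarrow> int" where "kk s = cc (fst (hd s))"

definition syl :: "'a word \<Rightarrow> bool" where
  "syl s \<longleftrightarrow> s \<noteq> [] \<and> s \<in> words_on V \<and> (\<forall>l\<in>set s. fst l \<in> NC \<and> cc (fst l) = kk s) \<and> (\<exists>v. es s v \<noteq> 0)"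

fun rf :: "'a word list \<Rightarrow> bool" where
  "rf [] = True"
| "rf [s] = syl s"
| "rf (s # t # ss) = (syl s \<and> kk s \<noteq> kk t \<and> rf (t # ss))"

lemma rf_tl: "rf (s # ss) \<Longrightarrow> rf ss"
  by (cases ss) auto

lemma rf_hd: "rf (s # ss) \<Longrightarrow> syl s"
  by (cases ss) auto

definition pol :: "'a word \<Rightarrow> int poly" where "pol s = sum_list (map mon s)"

lemma MM_syl: "\<forall>l\<in>set s. fst l \<in> NC \<and> cc (fst l) = k \<Longrightarrow> MM s = Pm k (pol s)"
  by (induction s) (auto simp: MM_Cons pol_def Lt_def Pm_mult Pm_zero)

lemma coeff_pol0: "coeff (pol s) 0 = 0"
  by (induction s) (auto simp: pol_def mon_def)

lemma coeff_pol:
  assumes "s \<in> words_on V" "v \<in> V"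
  shows "coeff (pol s) (Suc (idx v)) = es s v"
  using assms(1)
proof (induction s)
  case Nil then show ?case by (simp add: pol_def)
next
  case (Cons l s)
  have "fst l \<in> V" using Cons.prems by simp
  then have "idx (fst l) = idx v \<longleftrightarrow> fst l = v" using inj assms(2) by (auto simp: inj_on_def)
  then show ?case using Cons by (auto simp: pol_def mon_def es_Cons)
qed

lemma pol_nz:
  assumes "syl s"
  shows "pol s \<noteq> 0"
proof -
  obtain v where v: "es s v \<noteq> 0" using assms by (auto simp: syl_def)
  obtain l where "l \<in> set s" "fst l = v" using es_nonzero_in[OF v] by blast
  then have "v \<in> V" using assms by (auto simp: syl_def words_on_def)
  then have "coeff (pol s) (Suc (idx v)) \<noteq> 0" using coeff_pol[of s v] assms v by (simp add: syl_def)
  then show ?thesis by auto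
qed

lemma MM_syl': "syl s \<Longrightarrow> MM s = Pm (kk s) (pol s)"
  by (rule MM_syl) (simp add: syl_def)

lemma rf_pingpong: "rf ss \<Longrightarrow> ss \<noteq> [] \<Longrightarrow> inB (kk (hd ss)) (mv (MM (concat ss)) (1, 0))"
proof (induction ss rule: rf.induct)
  case 1 then show ?case by simp
next
  case (2 s)
  then have s: "syl s" by simp
  show ?case using pingpong[of "kk s" "(1, 0)" "pol s", OF inB_10] pol_nz[OF s] coeff_pol0 MM_syl'[OF s] by simp
next
  case (3 s t ss)
  then have s: "syl s" and IH: "inB (kk t) (mv (MM (concat (t # ss))) (1, 0))" and k: "kk s \<noteq> kk t" by auto
  define v where "v = mv (MM (concat (t # ss))) (1, 0)"
  have "\<not> inB (kk s) v" using inB_disj[of "kk t" "kk s" v] IH k v_def by metis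
  moreover have "v \<noteq> (0, 0)" using inB_nz IH v_def by metis
  ultimately have "inB (kk s) (mv (Pm (kk s) (pol s)) v)"
    using pingpong pol_nz[OF s] coeff_pol0 by metis
  then show ?case using MM_syl'[OF s] by (simp add: v_def MM_append mv_mm)
qed

end




context nbg
begin

lemma Zc_NC: "v \<in> V \<Longrightarrow> v \<in> Zc \<or> v \<in> NC"
  by (auto simp: NC_def)

lemma Zc_E: "a \<in> Zc \<Longrightarrow> b \<in> V \<Longrightarrow> a \<noteq> b \<Longrightarrow> E a b"
  by (auto simp: Zc_def)

lemma rf_exists:
  "w \<in> words_on V \<Longrightarrow> \<exists>c ss. c \<in> words_on V \<and> (\<forall>l\<in>set c. fst l \<in> Zc) \<and> rf ss \<and> (w, c @ concat ss) \<in> pc_rel V E"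
proof (induction w)
  case Nil
  show ?case by (intro exI[of _ "[]"]) (simp add: pc_rel_refl)
next
  case (Cons l w)
  then obtain c ss where c: "c \<in> words_on V" "\<forall>l\<in>set c. fst l \<in> Zc" and ss: "rf ss"
    and r: "(w, c @ concat ss) \<in> pc_rel V E" by auto
  have lV: "fst l \<in> V" using Cons.prems by simp
  have cw: "c @ concat ss \<in> words_on V" using pc_rel_words[OF r] by simp
  have r1: "(l # w, l # c @ concat ss) \<in> pc_rel V E"
    using rel_ctx[OF r, of "[l]" "[]"] lV by simp
  show ?case
  proof (cases "fst l \<in> Zc")
    case True
    then show ?thesis using r1 c ss lV by (intro exI[of _ "l # c"] exI[of _ ss]) auto
  next
    case False
    then have lN: "fst l \<in> NC" using lV by (simp add: NC_def)
    obtain a e where l: "l = (a, e)" by (cases l)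
    have "\<forall>l'\<in>set c. E a (fst l')"
    proof
      fix l' assume "l' \<in> set c"
      then have "fst l' \<in> Zc" "fst l' \<in> V" using c by (auto simp: Zc_def)
      moreover have "fst l' \<noteq> a" using calculation lN l by (auto simp: NC_def)
      ultimately show "E a (fst l')" using Zc_E[of "fst l'" a] lV l sE by auto
    qed
    then have "([(a, e)] @ c, c @ [(a, e)]) \<in> pc_rel V E"
      using move_right[of a V c E e] lV l c by simp
    then have "([] @ ([(a, e)] @ c) @ concat ss, [] @ (c @ [(a, e)]) @ concat ss) \<in> pc_rel V E"
      using cw by (intro rel_ctx) auto
    then have r2: "(l # w, c @ l # concat ss) \<in> pc_rel V E"
      using pc_rel_trans[OF r1] l by simp
    have syl1: "syl [l]" using Cons.prems lN by (auto simp: syl_def kk_def es_Cons intro!: exI[of _ "fst l"])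
    show ?thesis
    proof (cases "ss = [] \<or> kk (hd ss) \<noteq> cc (fst l)")
      case True
      have "rf ([l] # ss)"
      proof (cases ss)
        case Nil then show ?thesis using syl1 by simp
      next
        case (Cons t ss0)
        then show ?thesis using syl1 ss True by (simp add: kk_def)
      qed
      then show ?thesis using r2 c by (intro exI[of _ c] exI[of _ "[l] # ss"]) auto
    next
      case False
      then obtain s ss0 where sss: "ss = s # ss0" and ks: "kk s = cc (fst l)" by (cases ss) auto
      have sy: "syl s" using ss sss rf_hd by blast
      have ss0: "rf ss0" using ss sss rf_tl by blast
      define s' where "s' = l # s"
      have letters: "\<forall>l'\<in>set s'. fst l' \<in> NC \<and> cc (fst l') = cc (fst l)"
        using sy ks lN by (auto simp: s'_def syl_def)
      have s'w: "s' \<in> words_on V" using sy lV by (auto simp: s'_def syl_def)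
      have r3: "(l # w, c @ s' @ concat ss0) \<in> pc_rel V E" using r2 sss by (simp add: s'_def)
      show ?thesis
      proof (cases "\<exists>v. es s' v \<noteq> 0")
        case True
        have sy': "syl s'" using True letters s'w by (auto simp: syl_def kk_def s'_def)
        have kk': "kk s' = kk s" using ks by (simp add: kk_def s'_def)
        have "rf (s' # ss0)"
        proof (cases ss0)
          case Nil then show ?thesis using sy' by simp
        next
          case (Cons t ss1)
          then show ?thesis using sy' kk' ss sss by simp
        qed
        then show ?thesis using r3 c by (intro exI[of _ c] exI[of _ "s' # ss0"]) auto
      next
        case False
        have "(s', []) \<in> pc_rel V E"
        proof (rule collapse[OF G s'w])
          show "\<forall>l\<in>set s'. \<forall>l'\<in>set s'. fst l = fst l' \<or> E (fst l) (fst l')"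
            using letters cc_eq by metis
          show "\<forall>v. es s' v = 0" using False by simp
        qed
        then have "(c @ s' @ concat ss0, c @ [] @ concat ss0) \<in> pc_rel V E"
          using cw sss c by (intro rel_ctx) auto
        then have "(l # w, c @ concat ss0) \<in> pc_rel V E" using pc_rel_trans[OF r3] by simp
        then show ?thesis using c ss0 by blast
      qed
    qed
  qed
qed

lemma inj_core:
  assumes w: "w \<in> words_on V" and es0: "\<forall>v. es w v = 0" and M: "MM w = I2"
  shows "(w, []) \<in> pc_rel V E"
proof -
  obtain c ss where c: "c \<in> words_on V" "\<forall>l\<in>set c. fst l \<in> Zc" and ss: "rf ss"
    and r: "(w, c @ concat ss) \<in> pc_rel V E" using rf_exists[OF w] by blast
  have "MM c = I2" using c by (intro MM_central) (auto simp: NC_def)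
  then have M2: "MM (concat ss) = I2" using MM_rel[OF r] M by (simp add: MM_append)
  have "ss = []"
  proof (rule ccontr)
    assume "ss \<noteq> []"
    then show False using rf_pingpong[OF ss] M2 inB_10 by simp
  qed
  then have r': "(w, c) \<in> pc_rel V E" using r by simp
  have "(c, []) \<in> pc_rel V E"
  proof (rule collapse[OF G c(1)])
    show "\<forall>l\<in>set c. \<forall>l'\<in>set c. fst l = fst l' \<or> E (fst l) (fst l')"
    proof (intro ballI)
      fix l l' assume "l \<in> set c" "l' \<in> set c"
      then have "fst l \<in> Zc" "fst l' \<in> Zc" using c(2) by auto
      then have "fst l' \<in> V" by (simp add: Zc_def)
      then show "fst l = fst l' \<or> E (fst l) (fst l')" using Zc_E[OF \<open>fst l \<in> Zc\<close>] by blast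
    qed
    show "\<forall>v. es c v = 0" using es_rel[OF r'] es0 by metis
  qed
  then show ?thesis using pc_rel_trans[OF r'] by blast
qed

lemma inj_MM:
  assumes u: "u \<in> words_on V" and v: "v \<in> words_on V" and es: "es u = es v" and M: "MM u = MM v"
  shows "(u, v) \<in> pc_rel V E"
proof -
  have wi: "winv v \<in> words_on V" using winv_words[OF v] .
  have "MM (v @ winv v) = I2" using MM_rel[OF w_winv[OF v]] by simp
  then have "MM (u @ winv v) = I2" using M by (simp add: MM_append)
  moreover have "\<forall>x. es (u @ winv v) x = 0" using es by (simp add: es_append es_winv)
  ultimately have 1: "(u @ winv v, []) \<in> pc_rel V E" using u wi by (intro inj_core) auto
  have "((u @ winv v) @ v, [] @ v) \<in> pc_rel V E" using rel_append[OF 1 pc_rel_refl[OF v]] .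
  moreover have "(u @ (winv v @ v), u @ []) \<in> pc_rel V E" using rel_append[OF pc_rel_refl[OF u] winv_w[OF v]] .
  ultimately show ?thesis using pc_rel_sym pc_rel_trans by (metis append_assoc append_Nil append_Nil2)
qed

lemma comm_MM:
  assumes "x \<in> words_on V" "y \<in> words_on V"
  shows "(x @ y, y @ x) \<in> pc_rel V E \<longleftrightarrow> mm (MM x) (MM y) = mm (MM y) (MM x)"
proof
  assume "(x @ y, y @ x) \<in> pc_rel V E"
  then show "mm (MM x) (MM y) = mm (MM y) (MM x)" using MM_rel by (metis MM_append)
next
  assume "mm (MM x) (MM y) = mm (MM y) (MM x)"
  then show "(x @ y, y @ x) \<in> pc_rel V E" using assms
    by (intro inj_MM) (auto simp: MM_append es_append fun_eq_iff)
qed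

lemma CT:
  fixes X Y Z
  defines "H \<equiv> pc_group V E"
  assumes X: "X \<in> carrier H" and Y: "Y \<in> carrier H" and Z: "Z \<in> carrier H"
    and XY: "X \<otimes>\<^bsub>H\<^esub> Y = Y \<otimes>\<^bsub>H\<^esub> X" and YZ: "Y \<otimes>\<^bsub>H\<^esub> Z = Z \<otimes>\<^bsub>H\<^esub> Y"
    and nc: "\<exists>g\<in>carrier H. Y \<otimes>\<^bsub>H\<^esub> g \<noteq> g \<otimes>\<^bsub>H\<^esub> Y"
  shows "X \<otimes>\<^bsub>H\<^esub> Z = Z \<otimes>\<^bsub>H\<^esub> X"
proof -
  obtain x where x: "x \<in> words_on V" "X = cls V E x" using carrier_cls X unfolding H_def by blast
  obtain y where y: "y \<in> words_on V" "Y = cls V E y" using carrier_cls Y unfolding H_def by blast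
  obtain z where z: "z \<in> words_on V" "Z = cls V E z" using carrier_cls Z unfolding H_def by blast
  have ns: "\<not> (\<exists>a. MM y = M2 a 0 0 a)"
  proof
    assume "\<exists>a. MM y = M2 a 0 0 a"
    then obtain a where a: "MM y = M2 a 0 0 a" by blast
    obtain g where g: "g \<in> carrier H" "Y \<otimes>\<^bsub>H\<^esub> g \<noteq> g \<otimes>\<^bsub>H\<^esub> Y" using nc by blast
    obtain g' where g': "g' \<in> words_on V" "g = cls V E g'" using carrier_cls g(1) unfolding H_def by blast
    have "mm (MM y) (MM g') = mm (MM g') (MM y)" using a scalar_comm by metis
    then have "(y @ g', g' @ y) \<in> pc_rel V E" using comm_MM[OF y(1) g'(1)] by simp
    then show False using g g' y cls_comm_iff[OF y(1) g'(1)] unfolding H_def by simp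
  qed
  have "mm (MM x) (MM y) = mm (MM y) (MM x)"
    using XY x y comm_MM[OF x(1) y(1)] cls_comm_iff[OF x(1) y(1)] unfolding H_def by simp
  moreover have "mm (MM z) (MM y) = mm (MM y) (MM z)"
    using YZ z y comm_MM[OF z(1) y(1)] cls_comm_iff[OF z(1) y(1)] unfolding H_def by metis
  ultimately have "mm (MM x) (MM z) = mm (MM z) (MM x)" using commutant ns by metis
  then show ?thesis using x z comm_MM[OF x(1) z(1)] cls_comm_iff[OF x(1) z(1)] unfolding H_def by simp
qed

lemma no_chain: "\<not> has_centraliser_chain (pc_group V E) 3"
  by (rule no_chain3) (rule CT)

end

theorem mainTheorem13:
  fixes V :: "'a set" and E :: "'a \<Rightarrow> 'a \<Rightarrow> bool"
  assumes "fin_simple_graph V E"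
  shows "\<not> cdim_eq (pc_group V E) 3"
proof (cases "\<exists>a b c d. E a b \<and> E b c \<and> a \<noteq> c \<and> \<not> E a c \<and> d \<in> V \<and> d \<noteq> b \<and> \<not> E b d")
  case True
  then obtain a b c d where "E a b" "E b c" "a \<noteq> c" "\<not> E a c" "d \<in> V" "d \<noteq> b" "\<not> E b d" by blast
  then have "has_centraliser_chain (pc_group V E) 4" using chain4[OF assms] by blast
  then show ?thesis by (auto simp: cdim_eq_def)
next
  case False
  have "finite V" using assms by (simp add: fin_simple_graph_def)
  then obtain idx :: "'a \<Rightarrow> nat" where "inj_on idx V" using finite_imp_inj_to_nat_seg by blast
  then interpret nbg V E idx using assms False by unfold_locales blast+
  show ?thesis using no_chain by (simp add: cdim_eq_def)
qed


end
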